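(* For every composition $p=(p_1,\ldots,p_\ell)$ of positive integers, let $B_p 1=B_{p_1}B_{p_2}\cdots B_{p_\ell}\,1$. Then $$B_p1\Big|_{q\to 1+q}\;=\;\sum_{\mu\vdash |p|} P_\mu(q)\,e_\mu[X]$$ for some polynomials $P_\mu(q)$ with nonnegative integer coefficients. Here $|p|=p_1+\cdots+p_\ell$.
   Context: For an integer $a\ge1$, the modified Hall–Littlewood operator $B_a$ acts on symmetric functions $F[X]$ (with coefficients in $\mathbb{Q}[q]$) by $$B_aF[X]=F\Big[X+\epsilon\frac{1-q}{z}\Big]\sum_{r\ge0}z^re_r[X]\Big|_{z^a},$$ where $|_{z^a}$ denotes taking the coefficient of $z^a$. The brackets denote plethystic substitution, and $\epsilon$ is the plethystic variable with $p_k[\epsilon]=(-1)^k$. Thus $p_k[X+\epsilon\frac{1-q}{z}]=p_k[X]+(-1)^k\frac{1-q^k}{z^k}$. Equivalently, $$B_a=\sum_{r,s\ge0}(-1)^sq^r\,e_{a+r+s}\,e_r^\perp h_s^\perp,$$ where $e_{a+r+s}$ acts by multiplication and $f^\perp$ is the adjoint of multiplication by $f$ under the Hall scalar product. The notation $|_{q\to 1+q}$ means substituting $1+q$ for $q$. *)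

theory Defs
  imports "HOL-Library.Poly_Mapping" "HOL-Computational_Algebra.Polynomial" "HOL-Library.Multiset"
begin

text \<open>Symmetric functions over Q[q], realised as the free polynomial algebra
  Q[q][p_1, p_2, ...] in the power sums. A monomial p^alpha is indexed by
  alpha :: nat =>0 nat (alpha k = exponent of p_k).\<close>

type_synonym sym = "(nat \<Rightarrow>\<^sub>0 nat) \<Rightarrow>\<^sub>0 rat poly"

definition sconst :: "rat poly \<Rightarrow> sym" where
  "sconst c = Poly_Mapping.single 0 c"

definition pvar :: "nat \<Rightarrow> sym" where
  "pvar k = Poly_Mapping.single (Poly_Mapping.single k 1) 1"

text \<open>Elementary symmetric functions via Newton's identities:
  r e_r = sum_{i=1..r} (-1)^(i-1) e_{r-i} p_i.\<close>
function esym :: "nat \<Rightarrow> sym" where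
  "esym r = (if r = 0 then 1 else
     sconst [:1 / of_nat r:] *
       (\<Sum>i\<in>{1..r}. sconst [:(-1) ^ (i - 1):] * esym (r - i) * pvar i))"
  by auto
termination
  by (relation "measure id") auto

declare esym.simps [simp del]

definition emult :: "nat multiset \<Rightarrow> sym" where
  "emult mu = prod_mset (image_mset esym mu)"

definition partitions :: "nat \<Rightarrow> nat multiset set" where
  "partitions n = {mu. (\<forall>x\<in>#mu. 0 < x) \<and> sum_mset mu = n}"

text \<open>Plethystic substitution F[X + epsilon (1-q)/z], written as a polynomial
  in w = 1/z with coefficients in Lambda:
  p_k |-> p_k + (-1)^k (1 - q^k) w^k.\<close>
definition pleth_shift_var :: "nat \<Rightarrow> sym poly" where
  "pleth_shift_var k =
     [:pvar k:] + monom (sconst (smult ((-1) ^ k) (1 - [:0, 1:] ^ k))) k"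

definition pleth_shift :: "sym \<Rightarrow> sym poly" where
  "pleth_shift F =
     (\<Sum>alpha\<in>Poly_Mapping.keys F.
        [:sconst (Poly_Mapping.lookup F alpha):] *
        (\<Prod>k\<in>Poly_Mapping.keys alpha. pleth_shift_var k ^ Poly_Mapping.lookup alpha k))"

text \<open>B_a F = F[X + eps (1-q)/z] * sum_r z^r e_r |_{z^a}
  = sum_j (coefficient of z^{-j}) * e_{a+j}.\<close>
definition Bop :: "nat \<Rightarrow> sym \<Rightarrow> sym" where
  "Bop a F = (let G = pleth_shift F in
     (\<Sum>j\<le>degree G. coeff G j * esym (a + j)))"

definition Bcomp :: "nat list \<Rightarrow> sym" where
  "Bcomp p = foldr Bop p 1"

definition qshift :: "sym \<Rightarrow> sym" where
  "qshift F = Poly_Mapping.map (\<lambda>c. pcompose c [:1, 1:]) F"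

end

theory Submission
  imports Defs "HOL-Computational_Algebra.Formal_Power_Series"
begin


locale rhom =
  fixes h :: "'a::comm_ring_1 \<Rightarrow> 'b::comm_ring_1"
  assumes hadd: "h (x + y) = h x + h y"
    and hmult: "h (x * y) = h x * h y"
    and hone: "h 1 = 1"
begin
lemma hzero: "h 0 = 0"
  using hadd[of 0 0] by simp
lemma hsum: "h (sum f A) = (\<Sum>a\<in>A. h (f a))"
  by (induction A rule: infinite_finite_induct) (auto simp: hzero hadd)
lemma hprod: "h (prod f A) = (\<Prod>a\<in>A. h (f a))"
  by (induction A rule: infinite_finite_induct) (auto simp: hone hmult)
lemma hpower: "h (x ^ n) = h x ^ n"
  by (induction n) (auto simp: hone hmult)
lemma hminus: "h (- x) = - h x"
  using hadd[of x "-x"] hzero by (metis add.right_inverse neg_eq_iff_add_eq_0)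
lemma hdiff: "h (x - y) = h x - h y"
  using hadd[of x "-y"] hminus by simp
lemma hof_nat: "h (of_nat n) = of_nat n"
  by (induction n) (auto simp: hone hzero hadd)
lemma hprod_mset: "h (prod_mset M) = prod_mset (image_mset h M)"
  by (induction M) (auto simp: hone hmult)
end

lemma rhom_comp: "rhom f \<Longrightarrow> rhom g \<Longrightarrow> rhom (g \<circ> f)"
  unfolding rhom_def by auto

lemma upd_add: "Poly_Mapping.lookup f a = 0 \<Longrightarrow> Poly_Mapping.update a b f = f + Poly_Mapping.single a b"
  by (rule poly_mapping_eqI) (auto simp: lookup_update lookup_add lookup_single when_def)

lemma pm_induct[case_names zero add]:
  fixes P :: "('a \<Rightarrow>\<^sub>0 'b::monoid_add) \<Rightarrow> bool"
  assumes "P 0" "\<And>f a b. P f \<Longrightarrow> P (f + Poly_Mapping.single a b)"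
  shows "P f"
  by (induction f rule: update_induct) (auto simp: upd_add assms in_keys_iff)

lemma mult_from_singles:
  fixes h :: "('a::comm_monoid_add \<Rightarrow>\<^sub>0 'r::comm_ring_1) \<Rightarrow> 'b::comm_ring_1"
  assumes add: "\<And>x y. h (x + y) = h x + h y"
    and sing: "\<And>a b c d. h (Poly_Mapping.single a c * Poly_Mapping.single b d) =
                 h (Poly_Mapping.single a c) * h (Poly_Mapping.single b d)"
  shows "h (x * y) = h x * h y"
proof -
  have z: "h 0 = 0" using add[of 0 0] by simp
  have s: "h (Poly_Mapping.single a c * y) = h (Poly_Mapping.single a c) * h y" for a c y
    by (induction y rule: pm_induct) (auto simp: z add sing distrib_left)
  show ?thesis
    by (induction x rule: pm_induct) (auto simp: z add s distrib_right)
qed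

lemma eq_from_singles:
  fixes h g :: "('a \<Rightarrow>\<^sub>0 'r::comm_monoid_add) \<Rightarrow> 'b::ab_group_add"
  assumes "\<And>x y. h (x + y) = h x + h y" "\<And>x y. g (x + y) = g x + g y"
    and "\<And>a c. h (Poly_Mapping.single a c) = g (Poly_Mapping.single a c)"
  shows "h x = g x"
proof -
  have "h 0 = 0" "g 0 = 0" using assms(1)[of 0 0] assms(2)[of 0 0] by simp_all
  then show ?thesis by (induction x rule: pm_induct) (auto simp: assms)
qed

lemma lookup_map0: "f 0 = 0 \<Longrightarrow> Poly_Mapping.lookup (Poly_Mapping.map f p) k = f (Poly_Mapping.lookup p k)"
  by transfer (auto simp: when_def)

lemma qshift_add: "qshift (x + y) = qshift x + qshift y"
  unfolding qshift_def
  by (rule poly_mapping_eqI) (simp add: lookup_map0 lookup_add pcompose_add)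

lemma qshift_single: "qshift (Poly_Mapping.single a c) = Poly_Mapping.single a (pcompose c [:1,1:])"
  unfolding qshift_def by simp

lemma rhom_qshift: "rhom qshift"
proof
  show "qshift (x + y) = qshift x + qshift y" for x y by (rule qshift_add)
  show "qshift (x * y) = qshift x * qshift y" for x y
    by (rule mult_from_singles) (auto simp: qshift_add qshift_single mult_single pcompose_mult)
  show "qshift 1 = 1"
    using qshift_single[of 0 1] by (simp add: pcompose_1)
qed

interpretation qs: rhom qshift by (rule rhom_qshift)

lemma rhom_sconst: "rhom sconst"
  by unfold_locales (auto simp: sconst_def single_add mult_single)
interpretation sc: rhom sconst by (rule rhom_sconst)

lemma rhom_pconst: "rhom (\<lambda>x::'a::comm_ring_1. [:x:])"
  by unfold_locales (auto simp: one_pCons)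

lemma rhom_map_poly:
  assumes "rhom h" shows "rhom (map_poly h)"
proof -
  interpret h: rhom h by fact
  show ?thesis
  proof
    show "map_poly h (x + y) = map_poly h x + map_poly h y" for x y
      by (rule poly_eqI) (simp add: coeff_map_poly h.hzero h.hadd)
    show "map_poly h (x * y) = map_poly h x * map_poly h y" for x y
      by (rule poly_eqI) (simp add: coeff_map_poly h.hzero coeff_mult h.hsum h.hmult)
    show "map_poly h 1 = 1"
      by (rule poly_eqI) (simp add: coeff_map_poly h.hzero coeff_1 h.hone)
  qed
qed

definition monov :: "(nat \<Rightarrow> 'b::comm_ring_1) \<Rightarrow> (nat \<Rightarrow>\<^sub>0 nat) \<Rightarrow> 'b" where
  "monov v al = (\<Prod>k\<in>Poly_Mapping.keys al. v k ^ Poly_Mapping.lookup al k)"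

definition evalv :: "(nat \<Rightarrow> sym poly) \<Rightarrow> sym \<Rightarrow> sym poly" where
  "evalv v F = (\<Sum>al\<in>Poly_Mapping.keys F. [:sconst (Poly_Mapping.lookup F al):] * monov v al)"

lemma pleth_shift_evalv: "pleth_shift = evalv pleth_shift_var"
  by (auto simp: fun_eq_iff pleth_shift_def evalv_def monov_def)

lemma monov_superset:
  assumes "finite S" "Poly_Mapping.keys al \<subseteq> S"
  shows "monov v al = (\<Prod>k\<in>S. v k ^ Poly_Mapping.lookup al k)"
  unfolding monov_def
  by (rule prod.mono_neutral_left) (use assms in \<open>auto simp: in_keys_iff\<close>)

lemma monov_add: "monov v (al + be) = monov v al * monov v be"
proof -
  let ?S = "Poly_Mapping.keys al \<union> Poly_Mapping.keys be"
  have "monov v (al + be) = (\<Prod>k\<in>?S. v k ^ Poly_Mapping.lookup (al + be) k)"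
    by (rule monov_superset) (simp_all add: Poly_Mapping.keys_add)
  also have "\<dots> = (\<Prod>k\<in>?S. v k ^ Poly_Mapping.lookup al k) * (\<Prod>k\<in>?S. v k ^ Poly_Mapping.lookup be k)"
    by (simp add: lookup_add power_add prod.distrib)
  also have "\<dots> = monov v al * monov v be"
    by (simp add: monov_superset[of ?S al v] monov_superset[of ?S be v])
  finally show ?thesis .
qed

lemma monov_zero[simp]: "monov v 0 = 1"
  by (simp add: monov_def)

lemma evalv_superset:
  assumes "finite S" "Poly_Mapping.keys F \<subseteq> S"
  shows "evalv v F = (\<Sum>al\<in>S. [:sconst (Poly_Mapping.lookup F al):] * monov v al)"
  unfolding evalv_def
  by (rule sum.mono_neutral_left) (use assms in \<open>auto simp: in_keys_iff sconst_def\<close>)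

lemma evalv_add: "evalv v (F + G) = evalv v F + evalv v G"
proof -
  let ?S = "Poly_Mapping.keys F \<union> Poly_Mapping.keys G"
  have "evalv v (F + G) = (\<Sum>al\<in>?S. [:sconst (Poly_Mapping.lookup (F + G) al):] * monov v al)"
    by (rule evalv_superset) (simp_all add: Poly_Mapping.keys_add)
  also have "\<dots> = (\<Sum>al\<in>?S. [:sconst (Poly_Mapping.lookup F al):] * monov v al) +
                  (\<Sum>al\<in>?S. [:sconst (Poly_Mapping.lookup G al):] * monov v al)"
    by (simp add: lookup_add sc.hadd smult_add_left sum.distrib)
  also have "\<dots> = evalv v F + evalv v G"
    by (simp only: evalv_superset[of ?S F v, symmetric] evalv_superset[of ?S G v, symmetric] finite_keys finite_Un Un_upper1 Un_upper2)
  finally show ?thesis .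
qed

lemma evalv_single: "evalv v (Poly_Mapping.single al c) = [:sconst c:] * monov v al"
  by (cases "c = 0") (auto simp: evalv_def sconst_def)

lemma rhom_evalv: "rhom (evalv v)"
proof
  show "evalv v (x + y) = evalv v x + evalv v y" for x y by (rule evalv_add)
  show "evalv v (x * y) = evalv v x * evalv v y" for x y
    by (rule mult_from_singles) (auto simp: evalv_add evalv_single mult_single monov_add sc.hmult mult_ac)
  show "evalv v 1 = 1"
    using evalv_single[of v 0 1] by (simp add: sc.hone)
qed

lemma evalv_sconst: "evalv v (sconst c) = [:sconst c:]"
  by (simp add: sconst_def evalv_single)

lemma evalv_pvar: "evalv v (pvar k) = v k"
  by (simp add: pvar_def evalv_single monov_def sc.hone)

lemma (in rhom) hmonov: "h (monov v al) = monov (h \<circ> v) al"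
  by (simp add: monov_def hprod hpower)

definition vq :: "nat \<Rightarrow> sym poly" where
  "vq k = [:pvar k:] + monom (sconst (smult ((-1) ^ k) (1 - [:1, 1:] ^ k))) k"

lemma pcompose_power: "pcompose (p ^ n) q = (pcompose p q) ^ n"
  by (induction n) (auto simp: pcompose_1 pcompose_mult)

lemma qshift_sconst: "qshift (sconst c) = sconst (pcompose c [:1,1:])"
  by (simp add: sconst_def qshift_single)

lemma qshift_pvar: "qshift (pvar k) = pvar k"
  by (simp add: pvar_def qshift_single pcompose_1)

interpretation Qs: rhom "map_poly qshift" by (rule rhom_map_poly[OF rhom_qshift])

lemma Q_pconst: "map_poly qshift [:x:] = [:qshift x:]"
  by (simp add: map_poly_pCons qs.hzero)

lemma Q_v: "map_poly qshift (pleth_shift_var k) = vq k"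
  unfolding pleth_shift_var_def vq_def
  by (simp add: Qs.hadd Q_pconst map_poly_monom qs.hzero qshift_pvar qshift_sconst
      pcompose_smult pcompose_diff pcompose_1 pcompose_power pcompose_pCons)

lemma Q_pleth: "map_poly qshift (pleth_shift F) = evalv vq (qshift F)"
proof -
  interpret E1: rhom "evalv pleth_shift_var" by (rule rhom_evalv)
  interpret E2: rhom "evalv vq" by (rule rhom_evalv)
  have "(map_poly qshift \<circ> evalv pleth_shift_var) F = (evalv vq \<circ> qshift) F"
  proof (rule eq_from_singles)
    show "(map_poly qshift \<circ> evalv pleth_shift_var) (x + y) =
          (map_poly qshift \<circ> evalv pleth_shift_var) x + (map_poly qshift \<circ> evalv pleth_shift_var) y" for x y
      by (simp add: E1.hadd Qs.hadd)
    show "(evalv vq \<circ> qshift) (x + y) = (evalv vq \<circ> qshift) x + (evalv vq \<circ> qshift) y" for x y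
      by (simp add: E2.hadd qs.hadd)
    show "(map_poly qshift \<circ> evalv pleth_shift_var) (Poly_Mapping.single a c) =
          (evalv vq \<circ> qshift) (Poly_Mapping.single a c)" for a c
    proof -
      have vv: "map_poly qshift \<circ> pleth_shift_var = vq" by (simp add: fun_eq_iff Q_v)
      have "map_poly qshift ([:sconst c:] * monov pleth_shift_var a) =
            [:qshift (sconst c):] * monov (map_poly qshift \<circ> pleth_shift_var) a"
        by (simp only: Qs.hmult Q_pconst Qs.hmonov)
      then show ?thesis
        by (simp only: comp_apply evalv_single qshift_single vv qshift_sconst sconst_def)
    qed
  qed
  then show ?thesis by (simp add: pleth_shift_evalv)
qed



definition NewtonC :: "(nat \<Rightarrow> 'a::comm_ring_1) \<Rightarrow> (nat \<Rightarrow> 'a) \<Rightarrow> bool" where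
  "NewtonC a S \<longleftrightarrow> (\<forall>k. of_nat k * a k = (\<Sum>j=0..k. a j * S (k - j)))"

lemma NewtonC_fps: "NewtonC a S \<longleftrightarrow> fps_X * fps_deriv (Abs_fps a) = Abs_fps a * Abs_fps S"
proof -
  have "fps_nth (fps_X * fps_deriv (Abs_fps a)) k = of_nat k * a k" for k
    by (cases k) auto
  then show ?thesis
    unfolding NewtonC_def fps_eq_iff by (simp add: fps_mult_nth)
qed

lemma NewtonC_conv:
  assumes "NewtonC a S" "NewtonC b T"
  shows "NewtonC (\<lambda>m. \<Sum>k=0..m. a k * b (m - k)) (\<lambda>i. S i + T i)"
proof -
  have c: "Abs_fps (\<lambda>m. \<Sum>k=0..m. a k * b (m - k)) = Abs_fps a * Abs_fps b"
    by (simp add: fps_eq_iff fps_mult_nth)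
  have st: "Abs_fps (\<lambda>i. S i + T i) = Abs_fps S + Abs_fps T"
    by (simp add: fps_eq_iff)
  from assms have A: "fps_X * fps_deriv (Abs_fps a) = Abs_fps a * Abs_fps S"
    and B: "fps_X * fps_deriv (Abs_fps b) = Abs_fps b * Abs_fps T"
    by (simp_all add: NewtonC_fps)
  have "fps_X * fps_deriv (Abs_fps a * Abs_fps b) =
        Abs_fps a * (fps_X * fps_deriv (Abs_fps b)) + (fps_X * fps_deriv (Abs_fps a)) * Abs_fps b"
    by (simp add: algebra_simps)
  also have "\<dots> = (Abs_fps a * Abs_fps b) * (Abs_fps S + Abs_fps T)"
    by (simp add: A B algebra_simps)
  finally show ?thesis by (simp add: NewtonC_fps c st)
qed

definition cseq :: "'a::comm_ring_1 \<Rightarrow> nat \<Rightarrow> 'a" where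
  "cseq Q k = (if k = 0 then 1 else (Q - 1) * Q ^ (k - 1))"

lemma cseq_sum: "(\<Sum>j=0..k. cseq Q j) = Q ^ k"
proof (induction k)
  case 0 then show ?case by (simp add: cseq_def)
next
  case (Suc k) then show ?case by (simp add: cseq_def algebra_simps)
qed

lemma cseq_Newton: "NewtonC (cseq Q) (\<lambda>i. Q ^ i - 1)"
  unfolding NewtonC_def
proof
  fix k
  show "of_nat k * cseq Q k = (\<Sum>j=0..k. cseq Q j * (Q ^ (k - j) - 1))"
  proof (cases k)
    case 0 then show ?thesis by (simp add: cseq_def)
  next
    case (Suc n)
    have "(\<Sum>j=0..k. cseq Q j * Q ^ (k - j)) = Q ^ k + (\<Sum>j=Suc 0..k. cseq Q j * Q ^ (k - j))"
      by (simp add: sum.atLeast_Suc_atMost cseq_def)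
    also have "(\<Sum>j=Suc 0..k. cseq Q j * Q ^ (k - j)) = (\<Sum>j=Suc 0..k. (Q - 1) * Q ^ n)"
    proof (rule sum.cong)
      fix j assume "j \<in> {Suc 0..k}"
      then have "j - 1 + (k - j) = n" "j \<noteq> 0" using Suc by auto
      then show "cseq Q j * Q ^ (k - j) = (Q - 1) * Q ^ n"
        by (metis cseq_def mult.assoc power_add)
    qed simp
    also have "\<dots> = of_nat k * ((Q - 1) * Q ^ n)" using Suc by simp
    finally have "(\<Sum>j=0..k. cseq Q j * Q ^ (k - j)) = Q ^ k + of_nat k * ((Q - 1) * Q ^ n)" .
    moreover have "(\<Sum>j=0..k. cseq Q j * (Q ^ (k - j) - 1)) =
        (\<Sum>j=0..k. cseq Q j * Q ^ (k - j)) - (\<Sum>j=0..k. cseq Q j)"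
      by (simp add: right_diff_distrib sum_subtractf)
    moreover have "cseq Q k = (Q - 1) * Q ^ n" using Suc by (simp add: cseq_def)
    ultimately show ?thesis by (simp only: cseq_sum) simp
  qed
qed



lemma rev_conv:
  fixes a S :: "nat \<Rightarrow> 'a::comm_ring_1"
  assumes "S 0 = 0"
  shows "(\<Sum>j=0..k. a j * S (k - j)) = (\<Sum>i=1..k. a (k - i) * S i)"
proof -
  have "(\<Sum>j=0..k. a j * S (k - j)) = (\<Sum>i=0..k. a (k - i) * S (k - (k - i)))"
    using sum.atLeastAtMost_rev[of "\<lambda>j. a j * S (k - j)" 0 k] by simp
  also have "\<dots> = (\<Sum>i=0..k. a (k - i) * S i)"
    by (rule sum.cong) auto
  also have "\<dots> = (\<Sum>i=1..k. a (k - i) * S i)"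
    by (simp add: sum.atLeast_Suc_atMost assms)
  finally show ?thesis .
qed

lemma rhom_cst: "rhom (\<lambda>x::rat. sconst [:x:])"
  using rhom_comp[OF rhom_pconst rhom_sconst] by (simp add: o_def)
interpretation cst: rhom "\<lambda>x::rat. sconst [:x:]" by (rule rhom_cst)
interpretation pc: rhom "\<lambda>x::sym. [:x:]" by (rule rhom_pconst)

lemma cst_inv: "0 < k \<Longrightarrow> of_nat k * sconst [:1 / of_nat k:] = 1"
proof -
  assume k: "0 < k"
  have "of_nat k * sconst [:1 / of_nat k:] = sconst [:of_nat k:] * sconst [:1 / of_nat k:]"
    using cst.hof_nat[of k] by simp
  also have "\<dots> = sconst [:of_nat k * (1 / of_nat k):]"
    using cst.hmult by metis
  also have "\<dots> = 1" using k cst.hone by simp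
  finally show ?thesis .
qed

lemma cst_sign: "sconst [:(-1) ^ n:] = (-1) ^ n"
  by (simp add: cst.hpower cst.hminus cst.hone)

lemma esym_rec: "of_nat k * esym k = (\<Sum>i=1..k. (-1) ^ (i - 1) * esym (k - i) * pvar i)"
proof (cases "k = 0")
  case True then show ?thesis by simp
next
  case False
  have "esym k = sconst [:1 / of_nat k:] *
       (\<Sum>i\<in>{1..k}. sconst [:(-1) ^ (i - 1):] * esym (k - i) * pvar i)"
    using False by (subst esym.simps) simp
  then have "of_nat k * esym k = (of_nat k * sconst [:1 / of_nat k:]) *
       (\<Sum>i\<in>{1..k}. sconst [:(-1) ^ (i - 1):] * esym (k - i) * pvar i)"
    by (simp only: mult.assoc)
  also have "\<dots> = (\<Sum>i\<in>{1..k}. sconst [:(-1) ^ (i - 1):] * esym (k - i) * pvar i)"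
    using cst_inv[of k] False by (simp only: mult_1)
  also have "\<dots> = (\<Sum>i=1..k. (-1) ^ (i - 1) * esym (k - i) * pvar i)"
    by (simp only: cst_sign)
  finally show ?thesis .
qed

definition aS :: "nat \<Rightarrow> sym poly" where "aS k = [:esym k:]"
definition SS :: "nat \<Rightarrow> sym poly" where "SS i = (if i = 0 then 0 else (-1) ^ (i - 1) * [:pvar i:])"
abbreviation QQ :: "rat poly" where "QQ \<equiv> [:1, 1:]"
definition bT :: "nat \<Rightarrow> sym poly" where "bT k = monom (sconst (cseq QQ k)) k"
definition TT :: "nat \<Rightarrow> sym poly" where "TT i = monom (sconst (QQ ^ i - 1)) i"
definition EE :: "nat \<Rightarrow> sym poly" where "EE m = (\<Sum>k=0..m. aS k * bT (m - k))"

lemma aS_Newton: "NewtonC aS SS"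
  unfolding NewtonC_def
proof
  fix k
  have "of_nat k * aS k = [:of_nat k * esym k:]"
    by (simp only: aS_def pc.hmult pc.hof_nat)
  also have "\<dots> = (\<Sum>i=1..k. (-1) ^ (i - 1) * aS (k - i) * [:pvar i:])"
    unfolding esym_rec pc.hsum
    by (rule sum.cong) (simp_all only: pc.hmult pc.hpower pc.hminus pc.hone aS_def)
  also have "\<dots> = (\<Sum>i=1..k. aS (k - i) * SS i)"
  proof (rule sum.cong)
    fix i assume "i \<in> {1..k}"
    then have i: "(i = 0) = False" by simp
    show "(-1) ^ (i - 1) * aS (k - i) * [:pvar i:] = aS (k - i) * SS i"
      by (simp only: SS_def i if_False mult.assoc mult.commute mult.left_commute)
  qed simp
  also have "\<dots> = (\<Sum>j=0..k. aS j * SS (k - j))"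
    by (rule rev_conv[symmetric]) (simp only: SS_def simp_thms if_True)
  finally show "of_nat k * aS k = (\<Sum>j=0..k. aS j * SS (k - j))" .
qed

lemma monom_sum: "monom (sum f A) n = (\<Sum>a\<in>A. monom (f a) n)"
  by (induction A rule: infinite_finite_induct) (auto simp: add_monom[symmetric])

lemma bT_Newton: "NewtonC bT TT"
  unfolding NewtonC_def
proof
  fix k
  have "(\<Sum>j=0..k. bT j * TT (k - j)) = (\<Sum>j=0..k. monom (sconst (cseq QQ j * (QQ ^ (k - j) - 1))) k)"
  proof (rule sum.cong)
    fix j assume "j \<in> {0..k}"
    then have jk: "j + (k - j) = k" by simp
    show "bT j * TT (k - j) = monom (sconst (cseq QQ j * (QQ ^ (k - j) - 1))) k"
      by (simp only: bT_def TT_def mult_monom sc.hmult jk)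
  qed simp
  also have "\<dots> = monom (sconst (of_nat k * cseq QQ k)) k"
  proof -
    have e: "of_nat k * cseq QQ k = (\<Sum>j=0..k. cseq QQ j * (QQ ^ (k - j) - 1))"
      using cseq_Newton[of QQ] unfolding NewtonC_def by blast
    show ?thesis by (simp only: e sc.hsum monom_sum)
  qed
  also have "\<dots> = monom (of_nat k * sconst (cseq QQ k)) k"
    by (simp only: sc.hmult sc.hof_nat)
  also have "\<dots> = of_nat k * bT k"
    by (simp only: bT_def of_nat_poly mult_pCons_left mult_zero_left pCons_0_0 add_0_right smult_monom)
  finally show "of_nat k * bT k = (\<Sum>j=0..k. bT j * TT (k - j))" by (rule sym)
qed

lemma EE_Newton: "NewtonC EE (\<lambda>i. SS i + TT i)"
  using NewtonC_conv[OF aS_Newton bT_Newton] unfolding EE_def[abs_def] .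



lemma pcst_sign: "[:sconst [:(-1) ^ n:]:] = ((-1) ^ n :: sym poly)"
  by (simp only: cst_sign pc.hpower pc.hminus pc.hone)

lemma pcst_inv: "0 < k \<Longrightarrow> [:sconst [:1 / of_nat k:]:] * (of_nat k :: sym poly) = 1"
proof -
  assume k: "0 < k"
  have "[:sconst [:1 / of_nat k:]:] * (of_nat k :: sym poly) = [:sconst [:1 / of_nat k:] * of_nat k:]"
    by (simp only: pc.hmult pc.hof_nat)
  also have "\<dots> = 1" using cst_inv[OF k] by (simp add: mult.commute)
  finally show ?thesis .
qed

lemma const_mult_monom: "[:c:] * monom x n = monom (c * x) n"
  by (simp only: mult_pCons_left mult_zero_left pCons_0_0 add_0_right smult_monom)

lemma sign_rat: "0 < i \<Longrightarrow> (-1::rat) ^ (i - 1) * (-1) ^ i = -1"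
  by (cases i) auto

lemma vq_ST: "0 < i \<Longrightarrow> (-1) ^ (i - 1) * vq i = SS i + TT i"
proof -
  assume i: "0 < i"
  have "(-1) ^ (i - 1) * monom (sconst (smult ((-1) ^ i) (1 - QQ ^ i))) i =
        monom (sconst [:(-1) ^ (i - 1):] * sconst (smult ((-1) ^ i) (1 - QQ ^ i))) i"
    by (simp only: pcst_sign[symmetric] const_mult_monom)
  also have "\<dots> = monom (sconst (smult ((-1) ^ (i - 1) * (-1) ^ i) (1 - QQ ^ i))) i"
    by (simp only: sc.hmult[symmetric]) (simp add: mult.commute)
  also have "\<dots> = TT i"
    by (simp only: sign_rat[OF i] TT_def) simp
  finally show ?thesis
    using i by (simp add: vq_def SS_def distrib_left)
qed

lemma psi_esym: "evalv vq (esym m) = EE m"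
proof (induction m rule: less_induct)
  case (less m)
  interpret ev: rhom "evalv vq" by (rule rhom_evalv)
  show ?case
  proof (cases "m = 0")
    case True
    have e0: "esym 0 = 1" by (subst esym.simps) simp
    moreover have "EE 0 = 1"
      by (simp add: EE_def aS_def bT_def cseq_def sc.hone e0)
    ultimately show ?thesis using True by (simp add: ev.hone)
  next
    case False
    have "evalv vq (esym m) = [:sconst [:1 / of_nat m:]:] *
        (\<Sum>i=1..m. [:sconst [:(-1) ^ (i - 1):]:] * evalv vq (esym (m - i)) * vq i)"
      by (subst esym.simps) (simp only: False if_False ev.hmult ev.hsum evalv_sconst evalv_pvar)
    also have "(\<Sum>i=1..m. [:sconst [:(-1) ^ (i - 1):]:] * evalv vq (esym (m - i)) * vq i) =
               (\<Sum>i=1..m. EE (m - i) * (SS i + TT i))"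
    proof (rule sum.cong)
      fix i assume i: "i \<in> {1..m}"
      then have "m - i < m" "0 < i" using False by auto
      then show "[:sconst [:(-1) ^ (i - 1):]:] * evalv vq (esym (m - i)) * vq i = EE (m - i) * (SS i + TT i)"
        using less.IH[of "m - i"] vq_ST[of i] by (simp only: pcst_sign) (simp add: mult_ac)
    qed simp
    also have "\<dots> = (\<Sum>j=0..m. EE j * (SS (m - j) + TT (m - j)))"
      by (rule rev_conv[symmetric]) (simp add: SS_def TT_def sc.hzero)
    also have "\<dots> = of_nat m * EE m"
      using EE_Newton unfolding NewtonC_def by metis
    finally have "evalv vq (esym m) = ([:sconst [:1 / of_nat m:]:] * of_nat m) * EE m"
      by (simp only: mult.assoc)
    then show ?thesis using pcst_inv[of m] False by (simp only: mult_1)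
  qed
qed



definition npoly :: "rat poly \<Rightarrow> bool" where "npoly c \<longleftrightarrow> (\<forall>i. coeff c i \<in> \<nat>)"

lemma Nats_sum: "(\<And>a. a \<in> A \<Longrightarrow> f a \<in> \<nat>) \<Longrightarrow> sum f A \<in> (\<nat> :: 'a::semiring_1 set)"
  by (induction A rule: infinite_finite_induct) auto

lemma npoly_0: "npoly 0" by (simp add: npoly_def)
lemma npoly_1: "npoly 1" by (simp add: npoly_def coeff_1)
lemma npoly_add: "npoly a \<Longrightarrow> npoly b \<Longrightarrow> npoly (a + b)"
  by (simp add: npoly_def)
lemma npoly_mult: "npoly a \<Longrightarrow> npoly b \<Longrightarrow> npoly (a * b)"
  unfolding npoly_def coeff_mult by (auto intro!: Nats_sum)
lemma npoly_power: "npoly a \<Longrightarrow> npoly (a ^ n)"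
  by (induction n) (auto intro: npoly_1 npoly_mult)
lemma npoly_lin: "npoly [:a, b:] \<longleftrightarrow> a \<in> \<nat> \<and> b \<in> \<nat>"
  by (auto simp: npoly_def coeff_pCons split: nat.splits)

lemma npoly_cseq: "npoly (cseq QQ k)"
proof -
  have e: "QQ - 1 = [:0, 1:]" by (simp add: one_pCons)
  show ?thesis
  proof (cases "k = 0")
    case True then show ?thesis by (simp add: cseq_def npoly_1)
  next
    case False
    then have "cseq QQ k = [:0, 1:] * QQ ^ (k - 1)" by (simp only: cseq_def e if_False)
    moreover have "npoly ([:0, 1:] * QQ ^ (k - 1))"
      by (intro npoly_mult npoly_power) (simp_all add: npoly_lin)
    ultimately show ?thesis by simp
  qed
qed

inductive cone :: "nat \<Rightarrow> sym \<Rightarrow> bool" for n where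
  cone_zero: "cone n 0"
| cone_term: "npoly c \<Longrightarrow> mu \<in> partitions n \<Longrightarrow> cone n (sconst c * emult mu)"
| cone_add: "cone n x \<Longrightarrow> cone n y \<Longrightarrow> cone n (x + y)"

lemma cone_sum: "(\<And>a. a \<in> A \<Longrightarrow> cone n (f a)) \<Longrightarrow> cone n (sum f A)"
  by (induction A rule: infinite_finite_induct) (auto intro: cone_zero cone_add)

lemma emult_add: "emult (mu + nu) = emult mu * emult nu"
  by (simp add: emult_def)

lemma partitions_add: "mu \<in> partitions n \<Longrightarrow> nu \<in> partitions m \<Longrightarrow> mu + nu \<in> partitions (n + m)"
  by (auto simp: partitions_def)

lemma cone_mult_term:
  assumes "npoly c" "mu \<in> partitions n" "cone m y"
  shows "cone (n + m) (sconst c * emult mu * y)"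
  using assms(3)
proof (induction rule: cone.induct)
  case cone_zero then show ?case by (simp add: cone.cone_zero)
next
  case (cone_term d nu)
  have "sconst c * emult mu * (sconst d * emult nu) = sconst (c * d) * emult (mu + nu)"
    by (simp add: sc.hmult emult_add mult_ac)
  then show ?case using assms cone_term
    by (auto intro!: cone.cone_term npoly_mult partitions_add)
next
  case (cone_add x y)
  then show ?case by (simp add: distrib_left cone.cone_add)
qed

lemma cone_mult: "cone n x \<Longrightarrow> cone m y \<Longrightarrow> cone (n + m) (x * y)"
proof (induction rule: cone.induct)
  case cone_zero then show ?case by (simp add: cone.cone_zero)
next
  case (cone_term c mu) then show ?case by (rule cone_mult_term)
next
  case (cone_add x1 x2) then show ?case by (simp add: distrib_right cone.cone_add)
qed

lemma esym0: "esym 0 = 1" by (subst esym.simps) simp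

lemma cone_one: "cone 0 1"
proof -
  have "cone 0 (sconst 1 * emult {#})"
    by (rule cone_term) (auto simp: npoly_1 partitions_def)
  then show ?thesis by (simp add: sc.hone emult_def)
qed

lemma cone_sconst: "npoly c \<Longrightarrow> cone 0 (sconst c)"
  using cone_term[of c "{#}" 0] by (simp add: partitions_def emult_def)

lemma cone_esym: "cone n (esym n)"
proof (cases "n = 0")
  case True then show ?thesis by (simp add: esym0 cone_one)
next
  case False
  have "cone n (sconst 1 * emult {#n#})"
    by (rule cone_term) (use False in \<open>auto simp: npoly_1 partitions_def\<close>)
  then show ?thesis by (simp add: sc.hone emult_def)
qed

definition wcone :: "nat \<Rightarrow> sym poly \<Rightarrow> bool" where
  "wcone n G \<longleftrightarrow> (\<forall>j. j \<le> n \<longrightarrow> cone (n - j) (coeff G j)) \<and> (\<forall>j. n < j \<longrightarrow> coeff G j = 0)"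

lemma wcone_zero: "wcone n 0"
  by (simp add: wcone_def cone_zero)

lemma wcone_add: "wcone n x \<Longrightarrow> wcone n y \<Longrightarrow> wcone n (x + y)"
  by (simp add: wcone_def cone_add)

lemma wcone_sum: "(\<And>a. a \<in> A \<Longrightarrow> wcone n (f a)) \<Longrightarrow> wcone n (sum f A)"
  by (induction A rule: infinite_finite_induct) (auto intro: wcone_zero wcone_add)

lemma wcone_monom: "j \<le> n \<Longrightarrow> cone (n - j) x \<Longrightarrow> wcone n (monom x j)"
  by (auto simp: wcone_def coeff_monom cone_zero)

lemma wcone_mult:
  assumes G: "wcone n G" and H: "wcone m H"
  shows "wcone (n + m) (G * H)"
  unfolding wcone_def
proof (intro conjI allI impI)
  fix k assume k: "k \<le> n + m"
  show "cone (n + m - k) (coeff (G * H) k)"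
    unfolding coeff_mult
  proof (rule cone_sum)
    fix i assume i: "i \<in> {..k}"
    show "cone (n + m - k) (coeff G i * coeff H (k - i))"
    proof (cases "i \<le> n \<and> k - i \<le> m")
      case True
      then have "cone (n - i + (m - (k - i))) (coeff G i * coeff H (k - i))"
        using G H by (intro cone_mult) (auto simp: wcone_def)
      moreover have "n - i + (m - (k - i)) = n + m - k" using True i k by auto
      ultimately show ?thesis by simp
    next
      case False
      then have "coeff G i = 0 \<or> coeff H (k - i) = 0" using G H by (auto simp: wcone_def)
      then show ?thesis by (auto intro: cone_zero)
    qed
  qed
next
  fix k assume k: "n + m < k"
  have "coeff G i * coeff H (k - i) = 0" if "i \<le> k" for i
  proof -
    have "n < i \<or> m < k - i" using k that by auto
    then show ?thesis using G H by (auto simp: wcone_def)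
  qed
  then show "coeff (G * H) k = 0" unfolding coeff_mult by (auto intro!: sum.neutral)
qed

lemma wcone_const: "cone n x \<Longrightarrow> wcone n [:x:]"
  using wcone_monom[of 0 n x] by (simp add: monom_0)

lemma wcone_EE: "wcone m (EE m)"
  unfolding EE_def
proof (rule wcone_sum)
  fix k assume k: "k \<in> {0..m}"
  have "aS k * bT (m - k) = monom (esym k * sconst (cseq QQ (m - k))) (m - k)"
    by (simp only: aS_def bT_def const_mult_monom)
  moreover have "cone (m - (m - k)) (esym k * sconst (cseq QQ (m - k)))"
    using cone_mult[OF cone_esym cone_sconst[OF npoly_cseq]] k by simp
  ultimately show "wcone m (aS k * bT (m - k))"
    by (simp add: wcone_monom)
qed

interpretation evq: rhom "evalv vq" by (rule rhom_evalv)

lemma wcone_prod_esym: "wcone (sum_mset mu) (prod_mset (image_mset (\<lambda>x. evalv vq (esym x)) mu))"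
proof (induction mu)
  case empty then show ?case using wcone_const[OF cone_one] by (simp add: one_pCons)
next
  case (add x mu)
  then show ?case
    using wcone_mult[OF wcone_EE[of x] add.IH] by (simp add: psi_esym)
qed

lemma psi_cone: "cone n F \<Longrightarrow> wcone n (evalv vq F)"
proof (induction rule: cone.induct)
  case cone_zero then show ?case by (simp add: evq.hzero wcone_zero)
next
  case (cone_term c mu)
  have "evalv vq (sconst c * emult mu) = [:sconst c:] * prod_mset (image_mset (\<lambda>x. evalv vq (esym x)) mu)"
    by (simp add: evq.hmult evalv_sconst emult_def evq.hprod_mset multiset.map_comp o_def)
  moreover have "wcone (0 + sum_mset mu) \<dots>"
    by (rule wcone_mult[OF wcone_const[OF cone_sconst] wcone_prod_esym]) (use cone_term in simp)
  ultimately show ?case using cone_term by (simp add: partitions_def)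
next
  case (cone_add x y) then show ?case by (simp add: evq.hadd wcone_add)
qed



lemma qshift_esym: "qshift (esym r) = esym r"
proof (induction r rule: less_induct)
  case (less r)
  have "qshift (esym r) = (if r = 0 then 1 else sconst [:1 / of_nat r:] *
       (\<Sum>i\<in>{1..r}. sconst [:(-1) ^ (i - 1):] * qshift (esym (r - i)) * pvar i))"
    by (subst esym.simps) (simp add: qs.hmult qs.hsum qs.hone qshift_sconst qshift_pvar)
  also have "\<dots> = (if r = 0 then 1 else sconst [:1 / of_nat r:] *
       (\<Sum>i\<in>{1..r}. sconst [:(-1) ^ (i - 1):] * esym (r - i) * pvar i))"
    by (cases "r = 0") (auto intro!: sum.cong simp: less.IH)
  also have "\<dots> = esym r" by (rule esym.simps[symmetric])
  finally show ?case .
qed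

lemma Bop_step:
  assumes "cone n (qshift F)"
  shows "cone (a + n) (qshift (Bop a F))"
proof -
  let ?G = "pleth_shift F"
  have W: "wcone n (map_poly qshift ?G)"
    using psi_cone[OF assms] by (simp add: Q_pleth)
  have "qshift (Bop a F) = (\<Sum>j\<le>degree ?G. coeff (map_poly qshift ?G) j * esym (a + j))"
    by (simp add: Bop_def Let_def qs.hsum qs.hmult qshift_esym coeff_map_poly qs.hzero)
  also have "cone (a + n) \<dots>"
  proof (rule cone_sum)
    fix j
    show "cone (a + n) (coeff (map_poly qshift ?G) j * esym (a + j))"
    proof (cases "j \<le> n")
      case True
      then have "cone (n - j + (a + j)) (coeff (map_poly qshift ?G) j * esym (a + j))"
        using W by (intro cone_mult cone_esym) (auto simp: wcone_def)
      then show ?thesis using True by (simp add: add.commute)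
    next
      case False
      then show ?thesis using W by (simp add: wcone_def cone_zero)
    qed
  qed
  finally show ?thesis .
qed

lemma Bcomp_cone: "cone (sum_list p) (qshift (Bcomp p))"
proof (induction p)
  case Nil then show ?case by (simp add: Bcomp_def qs.hone cone_one)
next
  case (Cons a p)
  then show ?case using Bop_step[OF Cons.IH, of a] by (simp add: Bcomp_def)
qed

lemma size_le_sum: "(\<forall>x\<in>#mu. 0 < x) \<Longrightarrow> size mu \<le> sum_mset (mu :: nat multiset)"
  by (induction mu) auto

lemma mem_le_sum: "x \<in># mu \<Longrightarrow> x \<le> sum_mset (mu :: nat multiset)"
  by (induction mu) auto

lemma finite_partitions: "finite (partitions n)"
proof (rule finite_subset)
  show "partitions n \<subseteq> (\<Union>s\<in>{..n}. multisets_of_size {..n} s)"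
  proof
    fix mu assume "mu \<in> partitions n"
    then have "(\<forall>x\<in>#mu. 0 < x)" "sum_mset mu = n" by (auto simp: partitions_def)
    then have "size mu \<le> n" "set_mset mu \<subseteq> {..n}"
      using size_le_sum mem_le_sum by fastforce+
    then show "mu \<in> (\<Union>s\<in>{..n}. multisets_of_size {..n} s)"
      by (auto simp: multisets_of_size_def)
  qed
  show "finite (\<Union>s\<in>{..n}. multisets_of_size {..n} s)" by auto
qed

lemma cone_repr:
  assumes "cone n F"
  shows "\<exists>P. (\<forall>mu\<in>partitions n. npoly (P mu)) \<and>
             F = (\<Sum>mu\<in>partitions n. sconst (P mu) * emult mu)"
  using assms
proof (induction rule: cone.induct)
  case cone_zero
  show ?case by (rule exI[of _ "\<lambda>_. 0"]) (simp add: npoly_0 sc.hzero)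
next
  case (cone_term c mu)
  show ?case
  proof (rule exI[of _ "\<lambda>m. if m = mu then c else 0"], intro conjI)
    show "\<forall>m\<in>partitions n. npoly (if m = mu then c else 0)"
      using cone_term by (simp add: npoly_0)
    have "(\<Sum>m\<in>partitions n. sconst (if m = mu then c else 0) * emult m) =
          (\<Sum>m\<in>partitions n. if m = mu then sconst c * emult m else 0)"
      by (rule sum.cong) (auto simp: sc.hzero)
    also have "\<dots> = sconst c * emult mu"
      using cone_term finite_partitions by (simp add: sum.delta')
    finally show "sconst c * emult mu = (\<Sum>m\<in>partitions n. sconst (if m = mu then c else 0) * emult m)"
      by simp
  qed
next
  case (cone_add x y)
  then obtain P1 P2 where
    "\<forall>mu\<in>partitions n. npoly (P1 mu)" "x = (\<Sum>mu\<in>partitions n. sconst (P1 mu) * emult mu)"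
    "\<forall>mu\<in>partitions n. npoly (P2 mu)" "y = (\<Sum>mu\<in>partitions n. sconst (P2 mu) * emult mu)"
    by blast
  then show ?case
    by (intro exI[of _ "\<lambda>m. P1 m + P2 m"])
       (simp add: npoly_add sc.hadd distrib_right sum.distrib)
qed

theorem theorem2p1:
  fixes p :: "nat list"
  assumes "\<forall>x\<in>set p. 0 < x"
  shows "\<exists>P :: nat multiset \<Rightarrow> rat poly.
           (\<forall>mu\<in>partitions (sum_list p). \<forall>i. coeff (P mu) i \<in> \<nat>) \<and>
           qshift (Bcomp p) = (\<Sum>mu\<in>partitions (sum_list p). sconst (P mu) * emult mu)"
  using cone_repr[OF Bcomp_cone[of p]] unfolding npoly_def .


end
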